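(* Let $q>0$ and let $U,V\in C^{4}(\mathbb{R}^{2})$ be radially symmetric, $U>0$, $V>0$, viewed as functions of $r=|x|\in[0,\infty)$, such that $$\Delta^{2}(U-V)(r)\ge V^{-q}(r)-U^{-q}(r)\quad\forall r\ge 0,\qquad U(0)=V(0),\qquad U^{(k)}(0)=V^{(k)}(0),\ k=1,2,3.$$ Then $U(r)\ge V(r)$ for all $r\ge 0$. If furthermore $\Delta^{2}(U-V)(0)>0$, then $U(r)>V(r)$ for all $r>0$.
   Context: For radial functions on $\mathbb{R}^{2}$, $\Delta f(r)=\frac1r(rf'(r))'$; derivatives at $r=0$ are one-sided derivatives of the profile. *)

theory Defs
  imports "HOL-Analysis.Analysis"
begin

definition partial :: "'a::euclidean_space \<Rightarrow> ('a \<Rightarrow> real) \<Rightarrow> 'a \<Rightarrow> real" where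
  "partial b f x = deriv (\<lambda>t. f (x + t *\<^sub>R b)) 0"

fun Ck :: "nat \<Rightarrow> ('a::euclidean_space \<Rightarrow> real) \<Rightarrow> bool" where
  "Ck 0 f = continuous_on UNIV f"
| "Ck (Suc k) f = ((\<forall>x. f differentiable (at x)) \<and> (\<forall>b\<in>Basis. Ck k (partial b f)))"

definition laplacian :: "('a::euclidean_space \<Rightarrow> real) \<Rightarrow> 'a \<Rightarrow> real" where
  "laplacian f x = (\<Sum>b\<in>Basis. partial b (partial b f) x)"

definition radial :: "('a::real_normed_vector \<Rightarrow> real) \<Rightarrow> bool" where
  "radial f \<longleftrightarrow> (\<forall>x y. norm x = norm y \<longrightarrow> f x = f y)"

definition profile :: "(real^2 \<Rightarrow> real) \<Rightarrow> real \<Rightarrow> real" where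
  "profile f r = f (r *\<^sub>R axis 1 1)"

end

theory Submission
  imports Defs
begin


lemma partial_DERIV:
  assumes "f differentiable (at (x + t0 *\<^sub>R b))"
  shows "((\<lambda>t. f (x + t *\<^sub>R b)) has_real_derivative partial b f (x + t0 *\<^sub>R b)) (at t0)"
proof -
  define y where "y = x + t0 *\<^sub>R b"
  obtain f' where fd: "(f has_derivative f') (at y)" using assms y_def
    by (auto simp: differentiable_def)
  have lin: "linear f'" using fd has_derivative_linear by blast
  have gen: "((\<lambda>t. f (z + t *\<^sub>R b)) has_real_derivative f' b) (at s)" if "z + s *\<^sub>R b = y" for z s
  proof -
    have d1: "((\<lambda>t. z + t *\<^sub>R b) has_derivative (\<lambda>t. t *\<^sub>R b)) (at s)"
      by (auto intro!: derivative_eq_intros)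
    have d2: "(f has_derivative f') (at (z + s *\<^sub>R b))" using fd that by simp
    have "((\<lambda>t. f (z + t *\<^sub>R b)) has_derivative (\<lambda>t. f' (t *\<^sub>R b))) (at s)"
      using has_derivative_compose[OF d1 d2] by (simp add: o_def)
    moreover have "(\<lambda>t. f' (t *\<^sub>R b)) = (*) (f' b)"
      using lin by (auto simp: linear_scale mult.commute)
    ultimately show ?thesis by (simp add: has_field_derivative_def)
  qed
  have "partial b f y = f' b" unfolding partial_def
    by (rule DERIV_imp_deriv, rule gen) simp
  then show ?thesis using gen[of x t0] y_def by simp
qed

lemma Ck_cont: "Ck k f \<Longrightarrow> continuous_on UNIV f"
  by (cases k) (auto intro!: differentiable_imp_continuous_on simp: differentiable_on_def differentiable_at_withinI)

lemma Ck_mono: "Ck (Suc k) f \<Longrightarrow> Ck k f"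
proof (induction k arbitrary: f)
  case 0 then show ?case using Ck_cont[of "Suc 0" f] by simp
next
  case (Suc k) then show ?case by auto
qed

lemma partial_add:
  assumes "f differentiable (at x)" "g differentiable (at x)"
  shows "partial b (\<lambda>y. f y + g y) x = partial b f x + partial b g x"
  unfolding partial_def
  using partial_DERIV[of f x 0 b] partial_DERIV[of g x 0 b] assms
  by (intro DERIV_imp_deriv) (auto simp: partial_def intro!: derivative_eq_intros)

lemma partial_diff:
  assumes "f differentiable (at x)" "g differentiable (at x)"
  shows "partial b (\<lambda>y. f y - g y) x = partial b f x - partial b g x"
  unfolding partial_def
  using partial_DERIV[of f x 0 b] partial_DERIV[of g x 0 b] assms
  by (intro DERIV_imp_deriv) (auto simp: partial_def intro!: derivative_eq_intros)

lemma Ck_add: "Ck k f \<Longrightarrow> Ck k g \<Longrightarrow> Ck k (\<lambda>x. f x + g x)"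
proof (induction k arbitrary: f g)
  case 0 then show ?case by (auto intro: continuous_on_add)
next
  case (Suc k)
  have e: "partial b (\<lambda>y. f y + g y) = (\<lambda>x. partial b f x + partial b g x)" for b
    using Suc.prems by (auto intro!: partial_add)
  show ?case using Suc by (auto simp: e)
qed

lemma Ck_diff: "Ck k f \<Longrightarrow> Ck k g \<Longrightarrow> Ck k (\<lambda>x. f x - g x)"
proof (induction k arbitrary: f g)
  case 0 then show ?case by (auto intro: continuous_on_diff)
next
  case (Suc k)
  have e: "partial b (\<lambda>y. f y - g y) = (\<lambda>x. partial b f x - partial b g x)" for b
    using Suc.prems by (auto intro!: partial_diff)
  show ?case using Suc by (auto simp: e)
qed

lemma Ck_zero: "Ck k (\<lambda>x. 0)"
proof (induction k)
  case 0 then show ?case by simp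
next
  case (Suc k)
  have e: "partial b (\<lambda>x. 0::real) = (\<lambda>x. 0)" for b by (auto simp: partial_def intro!: DERIV_imp_deriv)
  show ?case using Suc by (simp add: e)
qed

lemma Ck_sum: "finite S \<Longrightarrow> (\<forall>b\<in>S. Ck k (f b)) \<Longrightarrow> Ck k (\<lambda>x. \<Sum>b\<in>S. f b x)"
proof (induction S rule: finite_induct)
  case empty then show ?case using Ck_zero by simp
next
  case (insert a S) then show ?case using Ck_add[of k "f a" "\<lambda>x. \<Sum>b\<in>S. f b x"] by simp
qed

abbreviation e1 :: "real^2" where "e1 \<equiv> axis 1 1"

lemma e1_Basis: "e1 \<in> Basis" by simp

lemma profile_DERIV:
  assumes "\<forall>x. f differentiable (at x)"
  shows "DERIV (profile f) r :> profile (partial e1 f) r"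
  using partial_DERIV[of f 0 r e1] assms unfolding profile_def by simp

lemma radial_profile: assumes "radial f" shows "f x = profile f (norm x)"
proof -
  have "norm (norm x *\<^sub>R e1) = norm x" by simp
  then show ?thesis using assms unfolding radial_def profile_def by metis
qed

lemma radial_line: assumes "radial f" "b \<in> Basis" shows "f (t *\<^sub>R b) = profile f t"
proof -
  have "norm (t *\<^sub>R b) = norm (t *\<^sub>R e1)" using assms(2) by simp
  then show ?thesis using assms(1) unfolding radial_def profile_def by blast
qed

lemma norm_line_DERIV:
  fixes y b :: "'a::euclidean_space"
  assumes "y \<noteq> 0"
  shows "((\<lambda>t. norm (y + t *\<^sub>R b)) has_real_derivative (y \<bullet> b) / norm y) (at 0)"
proof -
  have d1: "((\<lambda>t. y + t *\<^sub>R b) has_derivative (\<lambda>t. t *\<^sub>R b)) (at 0)"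
    by (auto intro!: derivative_eq_intros)
  have d2: "(norm has_derivative (\<lambda>h. h \<bullet> sgn y)) (at (y + 0 *\<^sub>R b))"
    using has_derivative_norm[OF assms] by simp
  have "((\<lambda>t. norm (y + t *\<^sub>R b)) has_derivative (\<lambda>t. (t *\<^sub>R b) \<bullet> sgn y)) (at 0)"
    using has_derivative_compose[OF d1 d2] by (simp add: o_def)
  moreover have "(\<lambda>t. (t *\<^sub>R b) \<bullet> sgn y) = (*) ((y \<bullet> b) / norm y)"
    by (rule ext) (simp add: sgn_div_norm inner_commute field_simps)
  ultimately show ?thesis by (simp add: has_field_derivative_def)
qed

lemma partial_rad:
  fixes f :: "'a::euclidean_space \<Rightarrow> real"
  assumes fg: "\<forall>y. f y = g (norm y)" and y: "y \<noteq> 0" and dg: "DERIV g (norm y) :> g1"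
  shows "partial b f y = g1 * ((y \<bullet> b) / norm y)"
proof -
  have "((\<lambda>t. g (norm (y + t *\<^sub>R b))) has_real_derivative g1 * ((y \<bullet> b) / norm y)) (at 0)"
    using DERIV_chain2[OF _ norm_line_DERIV[OF y, of b], of g g1] dg by simp
  then show ?thesis unfolding partial_def using fg by (simp add: DERIV_imp_deriv)
qed

lemma radial_laplacian:
  fixes f :: "real^2 \<Rightarrow> real"
  assumes fg: "\<forall>y. f y = g (norm y)" and dg: "\<forall>\<rho>>0. DERIV g \<rho> :> g1 \<rho>"
    and dg1: "DERIV g1 (norm x) :> g2" and x: "x \<noteq> 0"
  shows "laplacian f x = g2 + g1 (norm x) / norm x"
proof -
  define N where "N = norm x"
  have N: "N > 0" using x N_def by simp
  have pb: "partial b (partial b f) x = g2 * (x \<bullet> b)^2 / N^2 + g1 N / N - g1 N * (x \<bullet> b)^2 / N^3"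
    if b: "b \<in> Basis" for b
  proof -
    define n where "n = (\<lambda>t::real. norm (x + t *\<^sub>R b))"
    define h where "h = (\<lambda>t. g1 (n t) * ((x \<bullet> b) + t) / n t)"
    have bb: "b \<bullet> b = 1" using b by simp
    have S: "open {t. x + t *\<^sub>R b \<noteq> 0}"
      by (rule open_Collect_neq) (auto intro!: continuous_intros)
    have eq: "h t = partial b f (x + t *\<^sub>R b)" if "t \<in> {t. x + t *\<^sub>R b \<noteq> 0}" for t
    proof -
      have ne: "x + t *\<^sub>R b \<noteq> 0" using that by simp
      have "DERIV g (norm (x + t *\<^sub>R b)) :> g1 (norm (x + t *\<^sub>R b))" using dg ne by simp
      from partial_rad[OF fg ne this, of b] show ?thesis
        unfolding h_def n_def by (simp add: inner_add_left bb)
    qed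
    have dn: "DERIV n 0 :> (x \<bullet> b) / N" unfolding n_def N_def using norm_line_DERIV[OF x] .
    have n0: "n 0 = N" unfolding n_def N_def by simp
    have dg1': "DERIV g1 (n 0) :> g2" using dg1 n0 N_def by simp
    have dgn: "DERIV (\<lambda>t. g1 (n t)) 0 :> g2 * ((x \<bullet> b) / N)"
      using DERIV_chain2[OF dg1' dn] .
    have dp: "DERIV (\<lambda>t. (x \<bullet> b) + t) 0 :> 1" by (auto intro!: derivative_eq_intros)
    have dh: "DERIV h 0 :> ((g2 * ((x \<bullet> b) / N) * ((x \<bullet> b) + 0) + g1 (n 0) * 1) * n 0
         - g1 (n 0) * ((x \<bullet> b) + 0) * ((x \<bullet> b) / N)) / (n 0 * n 0)"
      unfolding h_def using DERIV_divide[OF DERIV_mult[OF dgn dp] dn] N n0 by simp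
    have dh2: "DERIV (\<lambda>t. partial b f (x + t *\<^sub>R b)) 0 :> ((g2 * ((x \<bullet> b) / N) * ((x \<bullet> b) + 0) + g1 (n 0) * 1) * n 0
         - g1 (n 0) * ((x \<bullet> b) + 0) * ((x \<bullet> b) / N)) / (n 0 * n 0)"
      by (rule has_field_derivative_transform_within_open[OF dh S]) (use x eq in auto)
    then show ?thesis unfolding partial_def[of b "partial b f"] using N
      by (subst DERIV_imp_deriv[OF dh2]) (simp add: n0 field_simps power2_eq_square power3_eq_cube)
  qed
  have sq: "(\<Sum>b\<in>(Basis::(real^2) set). (x \<bullet> b)^2) = N^2"
    unfolding N_def power2_norm_eq_inner by (subst euclidean_inner) (simp add: power2_eq_square)
  have "laplacian f x = (\<Sum>b\<in>(Basis::(real^2) set). g2 * (x \<bullet> b)^2 / N^2 + g1 N / N - g1 N * (x \<bullet> b)^2 / N^3)"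
    unfolding laplacian_def using pb by simp
  also have "\<dots> = g2 * N^2 / N^2 + 2 * (g1 N / N) - g1 N * N^2 / N^3"
    by (simp add: sum.distrib sum_subtractf sum_divide_distrib[symmetric] sum_distrib_left[symmetric] sq)
  also have "\<dots> = g2 + g1 N / N" using N by (simp add: field_simps power2_eq_square power3_eq_cube)
  finally show ?thesis using N_def by simp
qed



lemma mono_from:
  fixes G g :: "real \<Rightarrow> real"
  assumes "a \<le> r" "r \<le> b" "continuous_on {a..b} G"
    "\<And>x. a < x \<Longrightarrow> x < b \<Longrightarrow> DERIV G x :> g x \<and> g x \<ge> 0"
  shows "G a \<le> G r"
proof (rule DERIV_nonneg_imp_increasing_open[OF assms(1)])
  show "continuous_on {a..r} G" using assms(3) by (rule continuous_on_subset) (use assms in auto)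
  fix x assume "a < x" "x < r" then show "\<exists>y. DERIV G x :> y \<and> y \<ge> 0" using assms(2,4) by force
qed

lemma stage:
  fixes u u1 v v1 F :: "real \<Rightarrow> real" and a b C :: real
  assumes a: "0 \<le> a" "a \<le> b" and C: "0 \<le> C"
    and cu: "continuous_on {a..b} u" and cu1: "continuous_on {a..b} u1"
    and cv: "continuous_on {a..b} v" and cv1: "continuous_on {a..b} v1"
    and d: "\<And>x. a < x \<Longrightarrow> x < b \<Longrightarrow> DERIV u x :> u1 x \<and> DERIV (\<lambda>s. s * u1 s) x :> x * v x
       \<and> DERIV v x :> v1 x \<and> DERIV (\<lambda>s. s * v1 s) x :> x * F x \<and> F x \<ge> - C"
    and i: "a * v1 a \<ge> 0" "v a \<ge> 0" "a * u1 a \<ge> 0" "u a \<ge> 0"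
  shows "b * v1 b \<ge> - C * b * (b - a) \<and> v b \<ge> - C * (b - a)^2 / 2
     \<and> b * u1 b \<ge> - C * b * (b - a)^3 / 6 \<and> u b \<ge> - C * (b - a)^4 / 24"
proof -
  have s1: "r * v1 r \<ge> - C * r * (r - a)" if r: "a \<le> r" "r \<le> b" for r
  proof -
    have "(\<lambda>s. s * v1 s + C * s * (s - a)) a \<le> (\<lambda>s. s * v1 s + C * s * (s - a)) r"
    proof (rule mono_from[OF r])
      show "continuous_on {a..b} (\<lambda>s. s * v1 s + C * s * (s - a))"
        by (intro continuous_intros cv1)
      fix x assume x: "a < x" "x < b"
      have dx: "DERIV (\<lambda>s. s * v1 s) x :> x * F x" "F x \<ge> -C" using d[OF x] by auto
      have p: "DERIV (\<lambda>s. C * s * (s - a)) x :> C * (x - a) + C * x"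
        by (auto intro!: derivative_eq_intros simp: algebra_simps)
      have "DERIV (\<lambda>s. s * v1 s + C * s * (s - a)) x :> x * F x + (C * (x - a) + C * x)"
        using DERIV_add[OF dx(1) p] .
      moreover have "x * F x \<ge> x * (-C)" using dx(2) x a by (intro mult_left_mono) auto
      ultimately show "DERIV (\<lambda>s. s * v1 s + C * s * (s - a)) x :> x * F x + (C * (x - a) + C * x) \<and>
          x * F x + (C * (x - a) + C * x) \<ge> 0"
        using x a C mult_left_mono[of a x C] by (auto simp: algebra_simps)
    qed
    then show ?thesis using i by (simp add: algebra_simps)
  qed
  have s1': "v1 r \<ge> - C * (r - a)" if r: "a < r" "r < b" for r
  proof -
    have "r * v1 r \<ge> r * (- C * (r - a))" using s1[of r] r by (simp add: algebra_simps)
    from mult_left_le_imp_le[OF this] show ?thesis using r a by simp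
  qed
  have s2: "v r \<ge> - C * (r - a)^2 / 2" if r: "a \<le> r" "r \<le> b" for r
  proof -
    have "(\<lambda>s. v s + C * (s - a)^2 / 2) a \<le> (\<lambda>s. v s + C * (s - a)^2 / 2) r"
    proof (rule mono_from[OF r])
      show "continuous_on {a..b} (\<lambda>s. v s + C * (s - a)^2 / 2)"
        by (intro continuous_intros cv) auto
      fix x assume x: "a < x" "x < b"
      have dx: "DERIV v x :> v1 x" using d[OF x] by auto
      have p: "DERIV (\<lambda>s. C * (s - a)^2 / 2) x :> C * (x - a)"
        by (auto intro!: derivative_eq_intros simp: field_simps)
      have "DERIV (\<lambda>s. v s + C * (s - a)^2 / 2) x :> v1 x + C * (x - a)"
        using DERIV_add[OF dx p] .
      then show "DERIV (\<lambda>s. v s + C * (s - a)^2 / 2) x :> v1 x + C * (x - a) \<and> v1 x + C * (x - a) \<ge> 0"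
        using s1'[OF x] by auto
    qed
    then show ?thesis using i by (simp add: algebra_simps)
  qed
  have s3: "r * u1 r \<ge> - C * r * (r - a)^3 / 6" if r: "a \<le> r" "r \<le> b" for r
  proof -
    have "(\<lambda>s. s * u1 s + C * s * (s - a)^3 / 6) a \<le> (\<lambda>s. s * u1 s + C * s * (s - a)^3 / 6) r"
    proof (rule mono_from[OF r])
      show "continuous_on {a..b} (\<lambda>s. s * u1 s + C * s * (s - a)^3 / 6)"
        by (intro continuous_intros cu1) auto
      fix x assume x: "a < x" "x < b"
      have dx: "DERIV (\<lambda>s. s * u1 s) x :> x * v x" using d[OF x] by auto
      have p: "DERIV (\<lambda>s. C * s * (s - a)^3 / 6) x :> C * (x - a)^3 / 6 + C * x * (x - a)^2 / 2"
        by (auto intro!: derivative_eq_intros simp: field_simps power2_eq_square power3_eq_cube)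
      have "DERIV (\<lambda>s. s * u1 s + C * s * (s - a)^3 / 6) x :> x * v x + (C * (x - a)^3 / 6 + C * x * (x - a)^2 / 2)"
        using DERIV_add[OF dx p] .
      moreover have "x * v x \<ge> x * (- C * (x - a)^2 / 2)" using s2[of x] x a by (intro mult_left_mono) auto
      moreover have "C * (x - a)^3 \<ge> 0" using x C by simp
      moreover have "x * (- C * (x - a)^2 / 2) = - (C * x * (x - a)^2 / 2)" by (simp add: algebra_simps)
      ultimately show "DERIV (\<lambda>s. s * u1 s + C * s * (s - a)^3 / 6) x :> x * v x + (C * (x - a)^3 / 6 + C * x * (x - a)^2 / 2) \<and>
         x * v x + (C * (x - a)^3 / 6 + C * x * (x - a)^2 / 2) \<ge> 0"
        by linarith
    qed
    then show ?thesis using i by (simp add: algebra_simps)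
  qed
  have s3': "u1 r \<ge> - C * (r - a)^3 / 6" if r: "a < r" "r < b" for r
  proof -
    have "r * u1 r \<ge> r * (- C * (r - a)^3 / 6)" using s3[of r] r by (simp add: algebra_simps)
    from mult_left_le_imp_le[OF this] show ?thesis using r a by simp
  qed
  have s4: "u r \<ge> - C * (r - a)^4 / 24" if r: "a \<le> r" "r \<le> b" for r
  proof -
    have "(\<lambda>s. u s + C * (s - a)^4 / 24) a \<le> (\<lambda>s. u s + C * (s - a)^4 / 24) r"
    proof (rule mono_from[OF r])
      show "continuous_on {a..b} (\<lambda>s. u s + C * (s - a)^4 / 24)"
        by (intro continuous_intros cu) auto
      fix x assume x: "a < x" "x < b"
      have dx: "DERIV u x :> u1 x" using d[OF x] by auto
      have p: "DERIV (\<lambda>s. C * (s - a)^4 / 24) x :> C * (x - a)^3 / 6"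
        by (auto intro!: derivative_eq_intros simp: field_simps)
      have "DERIV (\<lambda>s. u s + C * (s - a)^4 / 24) x :> u1 x + C * (x - a)^3 / 6"
        using DERIV_add[OF dx p] .
      then show "DERIV (\<lambda>s. u s + C * (s - a)^4 / 24) x :> u1 x + C * (x - a)^3 / 6 \<and> u1 x + C * (x - a)^3 / 6 \<ge> 0"
        using s3'[OF x] by auto
    qed
    then show ?thesis using i by (simp add: algebra_simps)
  qed
  show ?thesis using s1[of b] s2[of b] s3[of b] s4[of b] a by auto
qed

lemma main1D:
  fixes u u1 v v1 F :: "real \<Rightarrow> real"
  assumes cu: "continuous_on UNIV u" and cu1: "continuous_on UNIV u1"
    and cv: "continuous_on UNIV v" and cv1: "continuous_on UNIV v1"
    and d: "\<And>x. 0 < x \<Longrightarrow> DERIV u x :> u1 x \<and> DERIV (\<lambda>s. s * u1 s) x :> x * v x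
       \<and> DERIV v x :> v1 x \<and> DERIV (\<lambda>s. s * v1 s) x :> x * F x"
    and i: "u 0 = 0" "u1 0 = 0" "v 0 = 0" "v1 0 = 0"
    and Fb: "\<And>B. B > 0 \<Longrightarrow> \<exists>K\<ge>0. \<forall>x\<in>{0..B}. F x \<ge> - K * max 0 (- u x)"
  shows "\<forall>x\<ge>0. u x \<ge> 0"
proof (rule ccontr)
  assume "\<not> ?thesis"
  then obtain t where t: "t \<ge> 0" "u t < 0" by auto
  define S where "S = {s. 0 \<le> s \<and> u s < 0}"
  define r1 where "r1 = Inf S"
  have Sne: "S \<noteq> {}" using t S_def by auto
  have bdd: "bdd_below S" unfolding S_def by (rule bdd_belowI[of _ 0]) auto
  have r1: "r1 \<ge> 0" unfolding r1_def by (rule cInf_greatest[OF Sne]) (auto simp: S_def)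
  have below: "u s \<ge> 0" if "0 \<le> s" "s < r1" for s
  proof (rule ccontr)
    assume "\<not> u s \<ge> 0" then have "s \<in> S" using that S_def by auto
    then have "r1 \<le> s" unfolding r1_def using bdd by (rule cInf_lower)
    then show False using that by simp
  qed
  obtain K where K: "K \<ge> 0" "\<forall>x\<in>{0..r1+1}. F x \<ge> - K * max 0 (- u x)" using Fb[of "r1+1"] r1 by auto
  have st1: "r1 * v1 r1 \<ge> 0 \<and> v r1 \<ge> 0 \<and> r1 * u1 r1 \<ge> 0 \<and> u r1 \<ge> 0"
  proof -
    have "r1 * v1 r1 \<ge> - 0 * r1 * (r1 - 0) \<and> v r1 \<ge> - 0 * (r1 - 0)^2 / 2
     \<and> r1 * u1 r1 \<ge> - 0 * r1 * (r1 - 0)^3 / 6 \<and> u r1 \<ge> - 0 * (r1 - 0)^4 / 24"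
    proof (rule stage[where F=F])
      show "continuous_on {0..r1} u" "continuous_on {0..r1} u1" "continuous_on {0..r1} v" "continuous_on {0..r1} v1"
        using cu cu1 cv cv1 by (auto intro: continuous_on_subset)
      fix x assume x: "0 < x" "x < r1"
      have "F x \<ge> - K * max 0 (- u x)" using K x by auto
      moreover have "max 0 (- u x) = 0" using below[of x] x by auto
      ultimately show "DERIV u x :> u1 x \<and> DERIV (\<lambda>s. s * u1 s) x :> x * v x
       \<and> DERIV v x :> v1 x \<and> DERIV (\<lambda>s. s * v1 s) x :> x * F x \<and> F x \<ge> - 0"
        using d[of x] x by auto
    qed (use r1 i in auto)
    then show ?thesis by simp
  qed
  define e where "e = 1 / (K + 1)"
  have e: "0 < e" "e \<le> 1" "K * e < 1" using K unfolding e_def by (auto simp: field_simps)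
  define b where "b = r1 + e"
  obtain s0 where s0: "s0 \<in> {r1..b}" "\<forall>y\<in>{r1..b}. u s0 \<le> u y"
  proof -
    have "continuous_on {r1..b} u" by (rule continuous_on_subset[OF cu]) auto
    moreover have "{r1..b} \<noteq> {}" using b_def e by auto
    ultimately show ?thesis using continuous_attains_inf[OF compact_Icc] that by blast
  qed
  obtain s where s: "s \<in> S" "s < b"
    using cInf_lessD[OF Sne, of b] e unfolding b_def r1_def by auto
  have "r1 \<le> s" unfolding r1_def using s(1) bdd by (rule cInf_lower)
  then have "u s0 \<le> u s" using s0 s by auto
  also have "u s < 0" using s S_def by auto
  finally have us0: "u s0 < 0" .
  define m where "m = - u s0"
  have m: "m > 0" using us0 m_def by simp
  have "s0 * v1 s0 \<ge> - (K*m) * s0 * (s0 - r1) \<and> v s0 \<ge> - (K*m) * (s0 - r1)^2 / 2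
     \<and> s0 * u1 s0 \<ge> - (K*m) * s0 * (s0 - r1)^3 / 6 \<and> u s0 \<ge> - (K*m) * (s0 - r1)^4 / 24"
  proof (rule stage[where F=F])
    show "continuous_on {r1..s0} u" "continuous_on {r1..s0} u1" "continuous_on {r1..s0} v" "continuous_on {r1..s0} v1"
      using cu cu1 cv cv1 by (auto intro: continuous_on_subset)
    fix x assume x: "r1 < x" "x < s0"
    have "x \<in> {0..r1+1}" using x s0 r1 e b_def by auto
    then have "F x \<ge> - K * max 0 (- u x)" using K by auto
    moreover have "max 0 (- u x) \<le> m" using s0 x m m_def by auto
    moreover have "K * max 0 (- u x) \<le> K * m" using calculation(2) K(1) by (rule mult_left_mono)
    ultimately show "DERIV u x :> u1 x \<and> DERIV (\<lambda>s. s * u1 s) x :> x * v x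
       \<and> DERIV v x :> v1 x \<and> DERIV (\<lambda>s. s * v1 s) x :> x * F x \<and> F x \<ge> - (K * m)"
      using d[of x] x r1 by auto
  qed (use r1 st1 s0 K m in auto)
  then have A: "u s0 \<ge> - (K*m) * (s0 - r1)^4 / 24" by simp
  have d0: "0 \<le> s0 - r1" "s0 - r1 \<le> e" using s0 b_def by auto
  have "(s0 - r1)^4 \<le> e^4" using d0 by (intro power_mono) auto
  also have "e^4 \<le> e" using power_decreasing[of 1 4 e] e by simp
  finally have "(s0 - r1)^4 \<le> e" .
  then have "K * m * (s0 - r1)^4 \<le> K * m * e" using K m by (intro mult_left_mono) auto
  moreover have "K * m * e = (K * e) * m" by simp
  moreover have "(K * e) * m < 1 * m" using e m by (intro mult_strict_right_mono) auto
  ultimately have "K * m * (s0 - r1)^4 < m" by linarith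
  then show False using A m_def m by (simp add: field_simps)
qed

lemma pos_from:
  fixes G g :: "real \<Rightarrow> real"
  assumes c: "continuous_on UNIV G" and G0: "G 0 \<ge> 0"
    and d: "\<And>x. 0 < x \<Longrightarrow> DERIV G x :> g x \<and> g x \<ge> 0"
    and dl: "\<delta> > 0" "\<And>x. 0 < x \<Longrightarrow> x < \<delta> \<Longrightarrow> g x > 0"
    and r: "r > 0"
  shows "G r > 0"
proof -
  define t where "t = min r \<delta> / 2"
  have t: "0 < t" "t < r" "t < \<delta>" using r dl unfolding t_def by auto
  have "G 0 < G t"
  proof (rule DERIV_pos_imp_increasing_open[OF t(1)])
    fix x assume "0 < x" "x < t" then show "\<exists>y. DERIV G x :> y \<and> y > 0" using d dl t by force
  qed (use c continuous_on_subset in blast)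
  also have "G t \<le> G r"
  proof (rule DERIV_nonneg_imp_increasing_open[of t r G])
    fix x assume x: "t < x" "x < r"
    have "0 < x" using t x by simp
    then show "\<exists>y. DERIV G x :> y \<and> y \<ge> 0" using d[of x] by blast
  qed (use c continuous_on_subset t in auto)
  finally show ?thesis using G0 by simp
qed


lemma powr_lip:
  fixes a b c q :: real
  assumes "0 < c" "c \<le> a" "a \<le> b" "q > 0"
  shows "a powr (-q) - b powr (-q) \<le> q * c powr (-q-1) * (b - a)"
proof (cases "a = b")
  case True then show ?thesis by simp
next
  case False
  then have ab: "a < b" using assms by simp
  have der: "DERIV (\<lambda>t. t powr (-q)) x :> (-q) * x powr (-q - 1)" if "a \<le> x" "x \<le> b" for x
    using has_real_derivative_powr[of x "-q"] that assms by simp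
  obtain z where z: "a < z" "z < b" "b powr (-q) - a powr (-q) = (b - a) * ((-q) * z powr (-q - 1))"
    using MVT2[OF ab der] by blast
  have "z powr (-q-1) \<le> c powr (-q-1)" using z assms by (intro powr_mono2') auto
  then have "(b - a) * q * z powr (-q-1) \<le> (b - a) * q * c powr (-q-1)"
    using ab assms by (intro mult_left_mono) auto
  moreover have "a powr (-q) - b powr (-q) = (b - a) * q * z powr (-q-1)" using z(3) by (simp add: algebra_simps)
  moreover have "(b - a) * q * c powr (-q-1) = q * c powr (-q-1) * (b - a)" by simp
  ultimately show ?thesis by linarith
qed

lemma even_deriv0:
  fixes g :: "real \<Rightarrow> real"
  assumes "DERIV g 0 :> D" "\<And>t. g (-t) = g t"
  shows "D = 0"
proof -
  have e: "(\<lambda>x. g (-x)) = g" by (rule ext) (rule assms(2))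
  have "DERIV g (- 0) :> D" using assms(1) by simp
  then have "DERIV (\<lambda>x. g (-x)) 0 :> - D" by (rule DERIV_mirror[THEN iffD1])
  then have "DERIV g 0 :> - D" unfolding e .
  then have "D = - D" by (rule DERIV_unique[OF assms(1)])
  then show ?thesis by linarith
qed
lemma Ck_partial: "Ck (Suc k) f \<Longrightarrow> b \<in> Basis \<Longrightarrow> Ck k (partial b f)" by simp
lemma Ck_diffble: "Ck (Suc k) f \<Longrightarrow> f differentiable (at x)" by simp

lemma DERIV_cont: assumes "\<And>x. DERIV f x :> f' x" shows "continuous_on UNIV f"
proof (rule continuous_at_imp_continuous_on, rule ballI)
  fix x show "isCont f x" using DERIV_isCont[OF assms[of x]] .
qed

lemma Ck_laplacian: "Ck (Suc (Suc k)) f \<Longrightarrow> Ck k (laplacian f)"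
proof -
  assume a: "Ck (Suc (Suc k)) f"
  have e: "laplacian f = (\<lambda>x. \<Sum>b\<in>Basis. partial b (partial b f) x)" by (rule ext) (simp add: laplacian_def)
  have "\<forall>b\<in>Basis. Ck k (partial b (partial b f))" using a by simp
  then show ?thesis unfolding e by (intro Ck_sum) simp_all
qed

lemma profile_abs: "radial f \<Longrightarrow> profile f t = profile f \<bar>t\<bar>"
  using radial_profile[of f "t *\<^sub>R e1"] by (simp add: profile_def)

lemma profile_chain:
  assumes "Ck 4 f"
  shows "\<And>r. DERIV (profile f) r :> profile (partial e1 f) r"
    "\<And>r. DERIV (profile (partial e1 f)) r :> profile (partial e1 (partial e1 f)) r"
    "(deriv ^^ 1) (profile f) = profile (partial e1 f)"
    "(deriv ^^ 2) (profile f) = profile (partial e1 (partial e1 f))"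
proof -
  have c: "Ck (Suc (Suc (Suc (Suc 0)))) f" using assms by (simp add: numeral_eq_Suc del: Ck.simps)
  then have d0: "\<forall>x. f differentiable (at x)" and d1: "\<forall>x. partial e1 f differentiable (at x)"
    using e1_Basis by auto
  show D0: "\<And>r. DERIV (profile f) r :> profile (partial e1 f) r" using profile_DERIV[OF d0] .
  show D1: "\<And>r. DERIV (profile (partial e1 f)) r :> profile (partial e1 (partial e1 f)) r" using profile_DERIV[OF d1] .
  have e0: "deriv (profile f) = profile (partial e1 f)" by (rule ext) (rule DERIV_imp_deriv[OF D0])
  have e1: "deriv (profile (partial e1 f)) = profile (partial e1 (partial e1 f))" by (rule ext) (rule DERIV_imp_deriv[OF D1])
  show "(deriv ^^ 1) (profile f) = profile (partial e1 f)" using e0 by simp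
  show "(deriv ^^ 2) (profile f) = profile (partial e1 (partial e1 f))" using e0 e1 by (simp add: numeral_2_eq_2)
qed

theorem mainTheorem14:
  fixes U V :: "real^2 \<Rightarrow> real" and q :: real
  assumes q: "q > 0"
    and CU: "Ck 4 U" and CV: "Ck 4 V"
    and radU: "radial U" and radV: "radial V"
    and Upos: "\<forall>x. U x > 0" and Vpos: "\<forall>x. V x > 0"
    and ineq: "\<forall>x. laplacian (laplacian (\<lambda>y. U y - V y)) x \<ge> V x powr (-q) - U x powr (-q)"
    and init0: "U 0 = V 0"
    and initk: "\<forall>k\<in>{1,2,3::nat}. (deriv ^^ k) (profile U) 0 = (deriv ^^ k) (profile V) 0"
  shows "(\<forall>x. U x \<ge> V x) \<and>
         (laplacian (laplacian (\<lambda>y. U y - V y)) 0 > 0 \<longrightarrow> (\<forall>x. x \<noteq> 0 \<longrightarrow> U x > V x))"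
proof -
  define w where "w = (\<lambda>y. U y - V y)"
  have Cw: "Ck 4 w" using Ck_diff[OF CU CV] w_def by simp
  have Cw': "Ck (Suc (Suc (Suc (Suc 0)))) w" using Cw by (simp add: numeral_eq_Suc del: Ck.simps)
  have wdiff: "\<forall>x. w differentiable (at x)" using Cw' by simp
  define u where "u = (\<lambda>r. profile U r - profile V r)"
  define u1 where "u1 = (\<lambda>r. profile (partial e1 U) r - profile (partial e1 V) r)"
  define u2 where "u2 = (\<lambda>r. profile (partial e1 (partial e1 U)) r - profile (partial e1 (partial e1 V)) r)"
  note pU = profile_chain[OF CU] and pV = profile_chain[OF CV]
  have du: "DERIV u r :> u1 r" for r unfolding u_def u1_def by (intro DERIV_diff pU(1) pV(1))
  have du1: "DERIV u1 r :> u2 r" for r unfolding u1_def u2_def by (intro DERIV_diff pU(2) pV(2))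
  have uabs: "u t = u \<bar>t\<bar>" for t unfolding u_def using profile_abs[OF radU] profile_abs[OF radV] by metis
  have wu: "\<forall>y. w y = u (norm y)" unfolding w_def u_def using radial_profile[OF radU] radial_profile[OF radV] by simp
  have Lw: "laplacian w x = u2 (norm x) + u1 (norm x) / norm x" if "x \<noteq> 0" for x
    using radial_laplacian[OF wu _ du1 that] du by blast
  define L where "L = laplacian w"
  have CL: "Ck 2 L" using Ck_laplacian[of 2 w] Cw unfolding L_def by (simp add: numeral_eq_Suc del: Ck.simps)
  have CL': "Ck (Suc (Suc 0)) L" using CL by (simp add: numeral_eq_Suc del: Ck.simps)
  have Ldiff: "\<forall>x. L differentiable (at x)" and L1diff: "\<forall>x. partial e1 L differentiable (at x)"
    using CL' e1_Basis by auto
  define v where "v = profile L"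
  define v1 where "v1 = profile (partial e1 L)"
  define v2 where "v2 = profile (partial e1 (partial e1 L))"
  have dv: "DERIV v r :> v1 r" for r unfolding v_def v1_def by (rule profile_DERIV[OF Ldiff])
  have dv1: "DERIV v1 r :> v2 r" for r unfolding v1_def v2_def by (rule profile_DERIV[OF L1diff])
  have vpos: "v r = u2 r + u1 r / r" if "r > 0" for r
  proof -
    have "r *\<^sub>R e1 \<noteq> 0" using that by (simp add: scaleR_eq_0_iff)
    then show ?thesis using Lw[of "r *\<^sub>R e1"] that unfolding v_def profile_def L_def by simp
  qed
  have Lrad: "\<forall>y. L y = v (norm y)"
  proof
    fix y show "L y = v (norm y)"
    proof (cases "y = 0")
      case True then show ?thesis by (simp add: v_def profile_def)
    next
      case False then have "norm y > 0" by simp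
      then show ?thesis using vpos[of "norm y"] Lw[OF False] unfolding L_def by simp
    qed
  qed
  define F where "F = profile (laplacian L)"
  have FL: "F r = v2 r + v1 r / r" if "r > 0" for r
  proof -
    have ne: "r *\<^sub>R e1 \<noteq> 0" using that by (simp add: scaleR_eq_0_iff)
    show ?thesis using radial_laplacian[OF Lrad _ dv1 ne] dv that unfolding F_def profile_def by simp
  qed
  have d: "DERIV u x :> u1 x \<and> DERIV (\<lambda>s. s * u1 s) x :> x * v x
       \<and> DERIV v x :> v1 x \<and> DERIV (\<lambda>s. s * v1 s) x :> x * F x" if x: "0 < x" for x
  proof (intro conjI)
    show "DERIV u x :> u1 x" by (rule du)
    show "DERIV v x :> v1 x" by (rule dv)
    have "DERIV (\<lambda>s. s * u1 s) x :> 1 * u1 x + x * u2 x" using DERIV_mult[OF DERIV_ident du1[of x]] by (simp add: mult.commute)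
    moreover have "1 * u1 x + x * u2 x = x * v x" using vpos[OF x] x by (simp add: field_simps)
    ultimately show "DERIV (\<lambda>s. s * u1 s) x :> x * v x" by simp
    have "DERIV (\<lambda>s. s * v1 s) x :> 1 * v1 x + x * v2 x" using DERIV_mult[OF DERIV_ident dv1[of x]] by (simp add: mult.commute)
    moreover have "1 * v1 x + x * v2 x = x * F x" using FL[OF x] x by (simp add: field_simps)
    ultimately show "DERIV (\<lambda>s. s * v1 s) x :> x * F x" by simp
  qed
  have cu: "continuous_on UNIV u" using DERIV_cont[OF du] .
  have cu1: "continuous_on UNIV u1" using DERIV_cont[OF du1] .
  have cv: "continuous_on UNIV v" using DERIV_cont[OF dv] .
  have cv1: "continuous_on UNIV v1" using DERIV_cont[OF dv1] .
  have i0: "u 0 = 0" unfolding u_def profile_def using init0 by simp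
  have i1: "u1 0 = 0" using initk pU(3) pV(3) unfolding u1_def by auto
  have u20: "u2 0 = 0" using initk pU(4) pV(4) unfolding u2_def by auto
  have pb: "partial b (partial b w) 0 = u2 0" if b: "b \<in> Basis" for b
  proof -
    have nb: "norm b = 1" using b by simp
    have wl: "(\<lambda>t. w (0 + t *\<^sub>R b)) = u"
    proof
      fix t show "w (0 + t *\<^sub>R b) = u t" using wu nb uabs[of t] by simp
    qed
    have pl: "(\<lambda>t. partial b w (0 + t *\<^sub>R b)) = u1"
    proof
      fix s
      have "DERIV (\<lambda>t. w (0 + t *\<^sub>R b)) s :> partial b w (0 + s *\<^sub>R b)"
        using partial_DERIV[of w 0 s b] wdiff by blast
      then have "DERIV u s :> partial b w (0 + s *\<^sub>R b)" unfolding wl .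
      then show "partial b w (0 + s *\<^sub>R b) = u1 s" using DERIV_unique du by blast
    qed
    have "partial b (partial b w) 0 = deriv u1 0" unfolding partial_def[of b "partial b w"] using pl by simp
    then show ?thesis using DERIV_imp_deriv[OF du1] by simp
  qed
  have i2: "v 0 = 0"
  proof -
    have "v 0 = L 0" by (simp add: v_def profile_def)
    also have "\<dots> = (\<Sum>b\<in>Basis. partial b (partial b w) 0)" unfolding L_def laplacian_def ..
    also have "\<dots> = 0" using pb u20 by simp
    finally show ?thesis .
  qed
  have i3: "v1 0 = 0"
  proof (rule even_deriv0[OF dv])
    fix t
    have h: "L (s *\<^sub>R e1) = v \<bar>s\<bar>" for s using Lrad by simp
    have "v t = v \<bar>t\<bar>" using h[of t] by (simp add: v_def profile_def)
    moreover have "v (-t) = v \<bar>t\<bar>" using h[of "-t"] by (simp add: v_def profile_def)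
    ultimately show "v (-t) = v t" by simp
  qed
  have Fineq: "F x \<ge> profile V x powr (-q) - profile U x powr (-q)" for x
    using ineq unfolding F_def L_def w_def profile_def by simp
  have uprof: "u x = profile U x - profile V x" for x unfolding u_def ..
  have PUpos: "profile U x > 0" "profile V x > 0" for x using Upos Vpos unfolding profile_def by auto
  have Fnn: "F x \<ge> 0" if "u x \<ge> 0" for x
  proof -
    have "profile U x powr (-q) \<le> profile V x powr (-q)"
      using that PUpos[of x] q unfolding u_def by (intro powr_mono2') auto
    then show ?thesis using Fineq[of x] by simp
  qed
  have Fb: "\<exists>K\<ge>0. \<forall>x\<in>{0..B}. F x \<ge> - K * max 0 (- u x)" if B: "B > 0" for B
  proof -
    have cpu: "continuous_on {0..B} (profile U)" using DERIV_cont[OF pU(1)] by (rule continuous_on_subset) simp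
    obtain x0 where x0: "x0 \<in> {0..B}" "\<forall>y\<in>{0..B}. profile U x0 \<le> profile U y"
      using continuous_attains_inf[OF compact_Icc _ cpu] B by auto
    define c where "c = profile U x0"
    have c: "c > 0" using PUpos c_def by simp
    define K where "K = q * c powr (-q-1)"
    have K: "K \<ge> 0" using q unfolding K_def by simp
    have "F x \<ge> - K * max 0 (- u x)" if x: "x \<in> {0..B}" for x
    proof (cases "u x \<ge> 0")
      case True then show ?thesis using Fnn[OF True] by simp
    next
      case False
      then have lt: "profile U x < profile V x" unfolding u_def by simp
      have "profile U x powr (-q) - profile V x powr (-q) \<le> K * (profile V x - profile U x)"
        unfolding K_def using powr_lip[of c "profile U x" "profile V x" q] c x0 x c_def lt q by auto
      then show ?thesis using Fineq[of x] False unfolding u_def by simp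
    qed
    then show ?thesis using K by blast
  qed
  have unn: "\<forall>x\<ge>0. u x \<ge> 0"
    by (rule main1D[OF cu cu1 cv cv1 d i0 i1 i2 i3 Fb])
  have part1: "\<forall>x. U x \<ge> V x"
  proof
    fix x :: "real^2"
    have "u (norm x) \<ge> 0" using unn by simp
    then show "U x \<ge> V x" using wu unfolding w_def by (metis diff_ge_0_iff_ge)
  qed
  have part2: "\<forall>x. x \<noteq> 0 \<longrightarrow> U x > V x" if pos: "laplacian (laplacian (\<lambda>y. U y - V y)) 0 > 0"
  proof -
    have F0: "F 0 > 0" using pos unfolding F_def L_def w_def profile_def by simp
    have CLL: "Ck 0 (laplacian L)" using Ck_laplacian[of 0 L] CL by (simp add: numeral_eq_Suc del: Ck.simps)
    have cF: "continuous_on UNIV F" unfolding F_def profile_def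
      by (rule continuous_on_compose2[OF CLL[simplified]]) (auto intro!: continuous_intros)
    obtain dl where dl: "dl > 0" "\<forall>x'. dist x' 0 < dl \<longrightarrow> dist (F x') (F 0) < F 0"
      using cF F0 unfolding continuous_on_iff by (meson UNIV_I)
    have Fp: "F x > 0" if "0 < x" "x < dl" for x
      using dl(2)[rule_format, of x] that by (auto simp: dist_real_def)
    have Fn: "F x \<ge> 0" if "0 \<le> x" for x using Fnn unn that by blast
    have g1: "x * v1 x > 0" if "x > 0" for x
    proof (rule pos_from[of "\<lambda>s. s * v1 s" "\<lambda>s. s * F s" dl])
      show "continuous_on UNIV (\<lambda>s. s * v1 s)" by (intro continuous_intros cv1)
    qed (use d Fp Fn dl that in auto)
    have g1': "v1 x > 0" if "x > 0" for x using g1[OF that] that by (simp add: zero_less_mult_iff)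
    have g2: "v x > 0" if "x > 0" for x
      by (rule pos_from[of v v1 1]) (use cv i2 d g1' less_imp_le that in auto)
    have g3: "x * u1 x > 0" if "x > 0" for x
    proof (rule pos_from[of "\<lambda>s. s * u1 s" "\<lambda>s. s * v s" 1])
      show "continuous_on UNIV (\<lambda>s. s * u1 s)" by (intro continuous_intros cu1)
    qed (use d g2 that in \<open>auto intro: less_imp_le[OF mult_pos_pos]\<close>)
    have g3': "u1 x > 0" if "x > 0" for x using g3[OF that] that by (simp add: zero_less_mult_iff)
    have g4: "u x > 0" if "x > 0" for x
      by (rule pos_from[of u u1 1]) (use cu i0 d g3' less_imp_le that in auto)
    show ?thesis
    proof (intro allI impI)
      fix x :: "real^2" assume "x \<noteq> 0"
      then have "u (norm x) > 0" using g4 by simp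
      then show "U x > V x" using wu unfolding w_def by (metis diff_gt_0_iff_gt)
    qed
  qed
  show ?thesis using part1 part2 by blast
qed

end
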